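(* Let $C\subseteq 2^X$ be a maximum class of VC-dimension $d$ and let $D\subseteq C$ be a maximum class (on the same domain $X$) of VC-dimension $d-1$. Then each $c\in C\setminus D$ is the source of a unique incomplete cube for $(C,D)$. Moreover, if $r':D\to X(D)$ is a representation map for $D$ and $r:C\to X(C)$ extends $r'$ by setting $r(c)=\mathrm{supp}(s^{-1}(c))$ for each $c\in C\setminus D$ (where $s^{-1}(c)$ is the unique incomplete cube with source $c$), then $r$ is a representation map for $C$.
   Context: $X$ is a finite set, $n=|X|$; concepts $c\subseteq X$ are identified with characteristic functions, $c|Y$ is the restriction to $Y$ and $C|Y=\{c|Y:c\in C\}$. $Y$ is shattered by $C$ if $C|Y=2^Y$; VC-dimension is the maximum size of a shattered set; $C$ is maximum if $|C|=\sum_{i=0}^d\binom{n}{i}$ with $d$ its VC-dimension. $X(C)$ is the family of sets shattered by $C$. A cube of $2^X$ is $\{T\cup Z:Z\subseteq Y\}$ with $Y\subseteq X$, $T\subseteq X\setminus Y$, support $\mathrm{supp}=Y$; a cube of $C$ is a cube contained in $C$. A missed simplex for $(C,D)$ is a set $\sigma\in X(C)\setminus X(D)$ (it has size $d$). An incomplete cube for $(C,D)$ is a cube $Q$ of $C$ whose support is a missed simplex; its source $s(Q)$ is the unique $c\in Q$ with $c|\mathrm{supp}(Q)\notin D|\mathrm{supp}(Q)$. A representation map for a class $E$ with $|E|=|X(E)|$ is a bijection $r:E\to X(E)$ with $c|(r(c)\cup r(c'))\ne c'|(r(c)\cup r(c'))$ for all distinct $c,c'\in E$. *)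

theory Defs
  imports Main
begin

text \<open>Concepts over a finite domain X are subsets c of X; the restriction c|Y is
  represented by c \<inter> Y (characteristic function restricted to Y).\<close>

definition restr :: "'a set set \<Rightarrow> 'a set \<Rightarrow> 'a set set" where
  "restr C Y = (\<lambda>c. c \<inter> Y) ` C"

definition shatters :: "'a set set \<Rightarrow> 'a set \<Rightarrow> bool" where
  "shatters C Y \<longleftrightarrow> restr C Y = Pow Y"

definition shattered_sets :: "'a set \<Rightarrow> 'a set set \<Rightarrow> 'a set set" where
  "shattered_sets X C = {Y. Y \<subseteq> X \<and> shatters C Y}"

definition vc_dim_is :: "'a set \<Rightarrow> 'a set set \<Rightarrow> nat \<Rightarrow> bool" where
  "vc_dim_is X C d \<longleftrightarrow>
     (\<exists>Y\<in>shattered_sets X C. card Y = d) \<and> (\<forall>Y\<in>shattered_sets X C. card Y \<le> d)"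

definition maximum_class :: "'a set \<Rightarrow> 'a set set \<Rightarrow> nat \<Rightarrow> bool" where
  "maximum_class X C d \<longleftrightarrow> C \<subseteq> Pow X \<and> vc_dim_is X C d \<and>
     card C = (\<Sum>i\<le>d. card X choose i)"

definition cube :: "'a set \<Rightarrow> 'a set \<Rightarrow> 'a set set" where
  "cube T Y = {T \<union> Z | Z. Z \<subseteq> Y}"

definition is_cube :: "'a set \<Rightarrow> 'a set \<Rightarrow> 'a set \<Rightarrow> bool" where
  "is_cube X T Y \<longleftrightarrow> Y \<subseteq> X \<and> T \<subseteq> X - Y"

definition incomplete_cube :: "'a set \<Rightarrow> 'a set set \<Rightarrow> 'a set set \<Rightarrow> 'a set \<Rightarrow> 'a set \<Rightarrow> bool" where
  "incomplete_cube X C D T Y \<longleftrightarrow> is_cube X T Y \<and> cube T Y \<subseteq> C \<and>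
     Y \<in> shattered_sets X C - shattered_sets X D"

definition is_source :: "'a set \<Rightarrow> 'a set set \<Rightarrow> 'a set set \<Rightarrow> 'a set \<Rightarrow> 'a set \<Rightarrow> 'a set \<Rightarrow> bool" where
  "is_source X C D T Y c \<longleftrightarrow> incomplete_cube X C D T Y \<and> c \<in> cube T Y \<and>
     c \<inter> Y \<notin> restr D Y"

definition representation_map :: "'a set \<Rightarrow> 'a set set \<Rightarrow> ('a set \<Rightarrow> 'a set) \<Rightarrow> bool" where
  "representation_map X E r \<longleftrightarrow> bij_betw r E (shattered_sets X E) \<and>
     (\<forall>c\<in>E. \<forall>c'\<in>E. c \<noteq> c' \<longrightarrow> c \<inter> (r c \<union> r c') \<noteq> c' \<inter> (r c \<union> r c'))"

end

theory Submission
  imports Defs "Jordan_Normal_Form.Determinant"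
begin
lemma LR_inverse:
  fixes A :: "'i \<Rightarrow> 'j \<Rightarrow> real" and B :: "'j \<Rightarrow> 'i \<Rightarrow> real"
  assumes fI: "finite I" and fJ: "finite J" and cIJ: "card I = card J"
    and AB: "\<And>i i'. i \<in> I \<Longrightarrow> i' \<in> I \<Longrightarrow> (\<Sum>j\<in>J. A i j * B j i') = (if i = i' then 1 else 0)"
    and j: "j \<in> J" and j': "j' \<in> J"
  shows "(\<Sum>i\<in>I. B j i * A i j') = (if j = j' then 1 else 0)"
proof -
  define n where "n = card I"
  obtain f where f: "bij_betw f {0..<n} I" using ex_bij_betw_nat_finite[OF fI] n_def by auto
  obtain g where g: "bij_betw g {0..<n} J" using ex_bij_betw_nat_finite[OF fJ] n_def cIJ by auto
  define MA where "MA = mat n n (\<lambda>(a,b). A (f a) (g b))"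
  define MB where "MB = mat n n (\<lambda>(a,b). B (g a) (f b))"
  have MAc: "MA \<in> carrier_mat n n" and MBc: "MB \<in> carrier_mat n n" unfolding MA_def MB_def by auto
  have "MA * MB = 1\<^sub>m n"
  proof (rule eq_matI)
    fix a b assume a: "a < dim_row (1\<^sub>m n :: real mat)" and b: "b < dim_col (1\<^sub>m n :: real mat)"
    then have a: "a < n" and b: "b < n" by auto
    have "(MA * MB) $$ (a, b) = (\<Sum>k\<in>{0..<n}. A (f a) (g k) * B (g k) (f b))"
      using a b unfolding MA_def MB_def by (auto simp: scalar_prod_def intro!: sum.cong)
    also have "\<dots> = (\<Sum>jj\<in>J. A (f a) jj * B jj (f b))"
      using sum.reindex_bij_betw[OF g, of "\<lambda>jj. A (f a) jj * B jj (f b)"] by simp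
    also have "\<dots> = (if f a = f b then 1 else 0)"
      using AB a b f by (auto simp: bij_betw_def)
    also have "\<dots> = (if a = b then 1 else 0)"
      using f a b by (auto simp: bij_betw_def inj_on_def)
    finally show "(MA * MB) $$ (a, b) = 1\<^sub>m n $$ (a, b)" using a b by simp
  qed (auto simp: MA_def MB_def)
  then have BA: "MB * MA = 1\<^sub>m n" using mat_mult_left_right_inverse[OF MAc MBc] by simp
  obtain a where a: "a < n" "g a = j" using j g by (auto simp: bij_betw_def)
  obtain b where b: "b < n" "g b = j'" using j' g by (auto simp: bij_betw_def)
  have "(\<Sum>i\<in>I. B j i * A i j') = (\<Sum>k\<in>{0..<n}. B (g a) (f k) * A (f k) (g b))"
    using sum.reindex_bij_betw[OF f, of "\<lambda>i. B j i * A i j'"] a b by simp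
  also have "\<dots> = (MB * MA) $$ (a, b)"
    using a b unfolding MA_def MB_def by (auto simp: scalar_prod_def intro!: sum.cong)
  also have "\<dots> = (if a = b then 1 else 0)" using BA a b by simp
  also have "\<dots> = (if j = j' then 1 else 0)" using g a b by (auto simp: bij_betw_def inj_on_def)
  finally show ?thesis .
qed
lemma shatters_iff: "shatters C Y \<longleftrightarrow> (\<forall>Z\<subseteq>Y. \<exists>c\<in>C. c \<inter> Y = Z)"
proof
  assume "shatters C Y"
  then have "(\<lambda>c. c \<inter> Y) ` C = Pow Y" unfolding shatters_def restr_def .
  then show "\<forall>Z\<subseteq>Y. \<exists>c\<in>C. c \<inter> Y = Z" by (metis PowI imageE)
next
  assume a: "\<forall>Z\<subseteq>Y. \<exists>c\<in>C. c \<inter> Y = Z"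
  have "(\<lambda>c. c \<inter> Y) ` C \<subseteq> Pow Y" by auto
  moreover have "Pow Y \<subseteq> (\<lambda>c. c \<inter> Y) ` C"
  proof
    fix Z assume "Z \<in> Pow Y"
    then obtain c where "c \<in> C" "c \<inter> Y = Z" using a by auto
    then show "Z \<in> (\<lambda>c. c \<inter> Y) ` C" by (metis imageI)
  qed
  ultimately show "shatters C Y" unfolding shatters_def restr_def by (rule equalityI)
qed

lemma shatters_mono: "C \<subseteq> C' \<Longrightarrow> shatters C Y \<Longrightarrow> shatters C' Y"
  unfolding shatters_iff by (meson subsetD)

definition lo :: "'a \<Rightarrow> 'a set set \<Rightarrow> 'a set set" where
  "lo x C = {c \<in> C. x \<notin> c}"
definition hi :: "'a \<Rightarrow> 'a set set \<Rightarrow> 'a set set" where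
  "hi x C = (\<lambda>c. c - {x}) ` {c \<in> C. x \<in> c}"

lemma card_lo_hi: assumes "finite C" shows "card C = card (lo x C) + card (hi x C)"
proof -
  have inj: "inj_on (\<lambda>c. c - {x}) {c \<in> C. x \<in> c}"
    by (auto simp: inj_on_def)
  have "C = lo x C \<union> {c \<in> C. x \<in> c}" unfolding lo_def by auto
  moreover have "lo x C \<inter> {c \<in> C. x \<in> c} = {}" unfolding lo_def by auto
  ultimately have "card C = card (lo x C) + card {c \<in> C. x \<in> c}"
    using assms by (metis (no_types, lifting) card_Un_disjoint finite_Un)
  also have "card {c \<in> C. x \<in> c} = card (hi x C)" unfolding hi_def using card_image[OF inj] by simp
  finally show ?thesis .
qed

lemma shatters_hi: assumes "shatters (hi x C) S" "x \<notin> S" shows "shatters C S"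
  unfolding shatters_iff
proof (intro allI impI)
  fix Z assume "Z \<subseteq> S"
  then obtain c where "c \<in> hi x C" "c \<inter> S = Z" using assms(1) unfolding shatters_iff by blast
  then obtain c' where "c' \<in> C" "c = c' - {x}" unfolding hi_def by auto
  then show "\<exists>c\<in>C. c \<inter> S = Z" using \<open>c \<inter> S = Z\<close> assms(2) by (intro bexI[of _ c']) auto
qed

lemma shatters_lohi: assumes "shatters (lo x C) S" "shatters (hi x C) S" "x \<notin> S"
  shows "shatters C (insert x S)"
  unfolding shatters_iff
proof (intro allI impI)
  fix Z assume Z: "Z \<subseteq> insert x S"
  show "\<exists>c\<in>C. c \<inter> insert x S = Z"
  proof (cases "x \<in> Z")
    case True
    then have "Z - {x} \<subseteq> S" using Z by auto
    then obtain c where "c \<in> hi x C" "c \<inter> S = Z - {x}" using assms(2) unfolding shatters_iff by blast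
    then obtain c' where c': "c' \<in> C" "x \<in> c'" "c = c' - {x}" unfolding hi_def by auto
    have "c' \<inter> insert x S = Z" using c' \<open>c \<inter> S = Z - {x}\<close> True assms(3) by auto
    then show ?thesis using c' by blast
  next
    case False
    then have "Z \<subseteq> S" using Z by auto
    then obtain c where "c \<in> lo x C" "c \<inter> S = Z" using assms(1) unfolding shatters_iff by blast
    then show ?thesis unfolding lo_def by (intro bexI[of _ c]) auto
  qed
qed

lemma shattered_sets_finite: "finite X \<Longrightarrow> finite (shattered_sets X C)"
  unfolding shattered_sets_def by (rule finite_subset[of _ "Pow X"]) auto

lemma pajor: "finite X \<Longrightarrow> C \<subseteq> Pow X \<Longrightarrow> card C \<le> card (shattered_sets X C)"
proof (induction X arbitrary: C rule: finite_induct)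
  case empty
  show ?case
  proof (cases "C = {}")
    case True then show ?thesis by simp
  next
    case False
    then have "C = {{}}" using empty by auto
    moreover have "shattered_sets {} C = {{}}" using \<open>C = {{}}\<close>
      unfolding shattered_sets_def shatters_iff by auto
    ultimately show ?thesis by simp
  qed
next
  case (insert x F)
  let ?L = "lo x C" and ?H = "hi x C"
  have finC: "finite C" using insert by (meson finite_Pow_iff finite_insert finite_subset)
  have L: "?L \<subseteq> Pow F" using insert.prems unfolding lo_def by auto
  have H: "?H \<subseteq> Pow F" using insert.prems unfolding hi_def by auto
  define S0 where "S0 = shattered_sets F ?L"
  define S1 where "S1 = shattered_sets F ?H"
  have f0: "finite S0" "finite S1" using insert shattered_sets_finite S0_def S1_def by auto
  have S0_iff: "S \<in> S0 \<longleftrightarrow> S \<subseteq> F \<and> shatters ?L S" for S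
    by (simp add: S0_def shattered_sets_def)
  have S1_iff: "S \<in> S1 \<longleftrightarrow> S \<subseteq> F \<and> shatters ?H S" for S
    by (simp add: S1_def shattered_sets_def)
  have SS_iff: "S \<in> shattered_sets (insert x F) C \<longleftrightarrow> S \<subseteq> insert x F \<and> shatters C S" for S
    by (simp add: shattered_sets_def)
  have LC: "?L \<subseteq> C" unfolding lo_def by auto
  have sub: "S0 \<union> S1 \<union> insert x ` (S0 \<inter> S1) \<subseteq> shattered_sets (insert x F) C"
  proof
    fix S assume "S \<in> S0 \<union> S1 \<union> insert x ` (S0 \<inter> S1)"
    then consider "S \<in> S0" | "S \<in> S1" | S' where "S' \<in> S0" "S' \<in> S1" "S = insert x S'" by blast
    then show "S \<in> shattered_sets (insert x F) C"
    proof cases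
      case 1 then show ?thesis unfolding S0_iff SS_iff using shatters_mono[OF LC, of S] by blast
    next
      case 2
      then have "S \<subseteq> F" "shatters ?H S" unfolding S1_iff by auto
      moreover then have "x \<notin> S" using insert.hyps(2) by blast
      ultimately show ?thesis unfolding SS_iff using shatters_hi[of x C S] by blast
    next
      case 3
      then have "S' \<subseteq> F" "shatters ?H S'" "shatters ?L S'" unfolding S1_iff S0_iff by auto
      moreover then have "x \<notin> S'" using insert.hyps(2) by blast
      ultimately show ?thesis unfolding SS_iff \<open>S = insert x S'\<close> using shatters_lohi[of x C S'] by blast
    qed
  qed
  have xS: "x \<notin> S" if "S \<in> S0 \<union> S1" for S
  proof -
    have "S \<subseteq> F" using that S0_iff S1_iff by auto
    then show ?thesis using insert.hyps(2) by auto
  qed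
  have disj: "(S0 \<union> S1) \<inter> insert x ` (S0 \<inter> S1) = {}"
  proof (intro equalityI subsetI)
    fix S assume "S \<in> (S0 \<union> S1) \<inter> insert x ` (S0 \<inter> S1)"
    then have "S \<in> S0 \<union> S1" and "x \<in> S" by auto
    then show "S \<in> {}" using xS by blast
  qed simp
  have inj: "inj_on (insert x) (S0 \<inter> S1)"
  proof (rule inj_onI)
    fix A B assume A: "A \<in> S0 \<inter> S1" and B: "B \<in> S0 \<inter> S1" and AB: "insert x A = insert x B"
    have "x \<notin> A" "x \<notin> B" using xS A B by auto
    then show "A = B" using AB by (metis Diff_insert_absorb)
  qed
  have fSS: "finite (shattered_sets (insert x F) C)" using shattered_sets_finite insert.hyps(1) by blast
  have c1: "card ?L \<le> card S0" using insert.IH[OF L] unfolding S0_def .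
  have c2: "card ?H \<le> card S1" using insert.IH[OF H] unfolding S1_def .
  have "card C = card ?L + card ?H" using card_lo_hi[OF finC] .
  also have "\<dots> \<le> card S0 + card S1" using c1 c2 by linarith
  also have "\<dots> = card (S0 \<union> S1) + card (S0 \<inter> S1)" using card_Un_Int[OF f0(1) f0(2)] .
  also have "\<dots> = card (S0 \<union> S1) + card (insert x ` (S0 \<inter> S1))" using card_image[OF inj] by simp
  also have "\<dots> = card (S0 \<union> S1 \<union> insert x ` (S0 \<inter> S1))"
    using card_Un_disjoint[OF _ _ disj] f0 by simp
  also have "\<dots> \<le> card (shattered_sets (insert x F) C)"
    using card_mono[OF fSS sub] .
  finally show ?case .
qed

lemma card_small_subsets: assumes "finite X"
  shows "card {S. S \<subseteq> X \<and> card S \<le> k} = (\<Sum>i\<le>k. card X choose i)"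
proof -
  have "{S. S \<subseteq> X \<and> card S \<le> k} = (\<Union>i\<in>{..k}. {S. S \<subseteq> X \<and> card S = i})" by auto
  moreover have "card (\<Union>i\<in>{..k}. {S. S \<subseteq> X \<and> card S = i}) = (\<Sum>i\<le>k. card {S. S \<subseteq> X \<and> card S = i})"
    by (rule card_UN_disjoint) (use assms in auto)
  ultimately show ?thesis using n_subsets[OF assms] by simp
qed

lemma sauer: assumes "finite X" "C \<subseteq> Pow X" "\<forall>S. S \<subseteq> X \<and> shatters C S \<longrightarrow> card S \<le> k"
  shows "card C \<le> (\<Sum>i\<le>k. card X choose i)"
proof -
  have "shattered_sets X C \<subseteq> {S. S \<subseteq> X \<and> card S \<le> k}" using assms(3) unfolding shattered_sets_def by auto
  then have "card (shattered_sets X C) \<le> card {S. S \<subseteq> X \<and> card S \<le> k}"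
    by (rule card_mono[rotated]) (use assms(1) in auto)
  then have "card C \<le> card {S. S \<subseteq> X \<and> card S \<le> k}"
    using pajor[OF assms(1,2)] by linarith
  also have "\<dots> = (\<Sum>i\<le>k. card X choose i)" by (rule card_small_subsets[OF assms(1)])
  finally show ?thesis .
qed

definition maxc :: "'a set \<Rightarrow> 'a set set \<Rightarrow> nat \<Rightarrow> bool" where
  "maxc X C k \<longleftrightarrow> C \<subseteq> Pow X \<and> (\<forall>S. S \<subseteq> X \<and> shatters C S \<longrightarrow> card S \<le> k)
     \<and> card C = (\<Sum>i\<le>k. card X choose i)"

lemma shatters_restr: assumes "S \<subseteq> A" shows "shatters (restr C A) S \<longleftrightarrow> shatters C S"
proof -
  have "\<And>c. c \<inter> A \<inter> S = c \<inter> S" using assms by auto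
  then show ?thesis unfolding shatters_iff restr_def by auto
qed

lemma restr_restr: "restr (restr C A) B = restr C (A \<inter> B)"
  unfolding restr_def by (auto simp: image_image Int_assoc)

lemma restr_Pow: "C \<subseteq> Pow X \<Longrightarrow> restr C X = C"
  unfolding restr_def by (auto simp: image_def) (metis Int_absorb2 PowD subsetD)+

lemma restr_delete: assumes "C \<subseteq> Pow X" shows "restr C (X - {x}) = lo x C \<union> hi x C"
proof -
  have "\<And>c. c \<in> C \<Longrightarrow> c \<inter> (X - {x}) = c - {x}" using assms by auto
  then have "restr C (X - {x}) = (\<lambda>c. c - {x}) ` C" unfolding restr_def by auto
  also have "\<dots> = lo x C \<union> hi x C"
  proof
    show "(\<lambda>c. c - {x}) ` C \<subseteq> lo x C \<union> hi x C"
    proof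
      fix a assume "a \<in> (\<lambda>c. c - {x}) ` C"
      then obtain c where c: "c \<in> C" "a = c - {x}" by auto
      show "a \<in> lo x C \<union> hi x C"
      proof (cases "x \<in> c")
        case True then have "a \<in> hi x C" unfolding hi_def using c by auto
        then show ?thesis by simp
      next
        case False then have "a \<in> lo x C" unfolding lo_def using c by auto
        then show ?thesis by simp
      qed
    qed
    show "lo x C \<union> hi x C \<subseteq> (\<lambda>c. c - {x}) ` C"
    proof
      fix a assume "a \<in> lo x C \<union> hi x C"
      then show "a \<in> (\<lambda>c. c - {x}) ` C"
      proof
        assume "a \<in> lo x C"
        then have "a \<in> C" "a = a - {x}" unfolding lo_def by auto
        then show ?thesis by (metis imageI)
      next
        assume "a \<in> hi x C"
        then show ?thesis unfolding hi_def by auto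
      qed
    qed
  qed
  finally show ?thesis .
qed

lemma red_mem: assumes "a \<in> lo x C \<inter> hi x C" shows "a \<in> C" "x \<notin> a" "insert x a \<in> C"
proof -
  show "a \<in> C" "x \<notin> a" using assms unfolding lo_def by auto
  from assms obtain c where "c \<in> C" "x \<in> c" "a = c - {x}" unfolding hi_def by auto
  then show "insert x a \<in> C" by (simp add: insert_absorb)
qed

lemma shatters_empty: "shatters C {} \<longleftrightarrow> C \<noteq> {}"
  unfolding shatters_iff by auto

lemma pascal_sum: "(\<Sum>i\<le>Suc k. Suc m choose i) = (\<Sum>i\<le>Suc k. m choose i) + (\<Sum>i\<le>k. m choose i)"
  by (induction k) auto

lemma maxc_delete: assumes fX: "finite X" and x: "x \<in> X" and M: "maxc X C k"
  shows "maxc (X - {x}) (lo x C \<union> hi x C) k"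
    and "k \<ge> 1 \<Longrightarrow> maxc (X - {x}) (lo x C \<inter> hi x C) (k - 1)"
proof -
  let ?L = "lo x C" and ?H = "hi x C" and ?X = "X - {x}"
  have CP: "C \<subseteq> Pow X" and shC: "\<And>S. S \<subseteq> X \<Longrightarrow> shatters C S \<Longrightarrow> card S \<le> k"
    and cC: "card C = (\<Sum>i\<le>k. card X choose i)" using M unfolding maxc_def by auto
  have finC: "finite C" using CP fX by (meson finite_Pow_iff finite_subset)
  have LP: "?L \<subseteq> Pow ?X" using CP unfolding lo_def by auto
  have HP: "?H \<subseteq> Pow ?X" using CP unfolding hi_def by auto
  have fX': "finite ?X" using fX by auto
  have cX: "card X = Suc (card ?X)" using card_Suc_Diff1[OF fX x] by simp
  have UP: "?L \<union> ?H \<subseteq> Pow ?X" "?L \<inter> ?H \<subseteq> Pow ?X" using LP HP by auto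
  have sh1: "\<forall>S. S \<subseteq> ?X \<and> shatters (?L \<union> ?H) S \<longrightarrow> card S \<le> k"
  proof (intro allI impI)
    fix S assume a: "S \<subseteq> ?X \<and> shatters (?L \<union> ?H) S"
    then have "shatters (restr C ?X) S" using restr_delete[OF CP] by simp
    then have "shatters C S" using shatters_restr a by blast
    then show "card S \<le> k" using shC a by auto
  qed
  have sh2': "shatters C (insert x S)" if "S \<subseteq> ?X" "shatters (?L \<inter> ?H) S" for S
  proof -
    have "shatters ?L S" using shatters_mono[of "?L \<inter> ?H" ?L S] that(2) by blast
    moreover have "shatters ?H S" using shatters_mono[of "?L \<inter> ?H" ?H S] that(2) by blast
    moreover have "x \<notin> S" using that(1) by blast
    ultimately show ?thesis using shatters_lohi[of x C S] by blast
  qed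
  have sh2: "\<forall>S. S \<subseteq> ?X \<and> shatters (?L \<inter> ?H) S \<longrightarrow> card S \<le> k - 1"
  proof (intro allI impI)
    fix S assume a: "S \<subseteq> ?X \<and> shatters (?L \<inter> ?H) S"
    then have "shatters C (insert x S)" using sh2' by blast
    moreover have "insert x S \<subseteq> X" using a x by blast
    ultimately have "card (insert x S) \<le> k" using shC by blast
    moreover have "finite S" using a fX' finite_subset by blast
    moreover have "x \<notin> S" using a by auto
    ultimately show "card S \<le> k - 1" by simp
  qed
  have b1: "card (?L \<union> ?H) \<le> (\<Sum>i\<le>k. card ?X choose i)" using sauer[OF fX' UP(1) sh1] .
  have b2: "card (?L \<inter> ?H) \<le> (\<Sum>i\<le>k - 1. card ?X choose i)" using sauer[OF fX' UP(2) sh2] .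
  have finLH: "finite ?L" "finite ?H" using LP HP fX' by (meson finite_Pow_iff finite_subset)+
  have tot: "card (?L \<union> ?H) + card (?L \<inter> ?H) = (\<Sum>i\<le>k. card X choose i)"
    using card_lo_hi[OF finC] card_Un_Int[OF finLH] cC by simp
  have eqs: "card (?L \<union> ?H) = (\<Sum>i\<le>k. card ?X choose i) \<and>
     (k \<ge> 1 \<longrightarrow> card (?L \<inter> ?H) = (\<Sum>i\<le>k - 1. card ?X choose i))"
  proof (cases k)
    case 0
    have "?L \<inter> ?H = {}"
    proof (rule ccontr)
      assume "?L \<inter> ?H \<noteq> {}"
      then have "shatters C {x}" using sh2'[of "{}"] shatters_empty by auto
      then show False using shC[of "{x}"] x 0 by auto
    qed
    then show ?thesis using tot 0 by simp
  next
    case (Suc k')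
    have "(\<Sum>i\<le>k. card X choose i) = (\<Sum>i\<le>k. card ?X choose i) + (\<Sum>i\<le>k - 1. card ?X choose i)"
      unfolding cX Suc using pascal_sum by simp
    then show ?thesis using tot b1 b2 by linarith
  qed
  show "maxc ?X (?L \<union> ?H) k" unfolding maxc_def using UP(1) sh1 eqs by (intro conjI) simp_all
  show "maxc ?X (?L \<inter> ?H) (k - 1)" if "k \<ge> 1" unfolding maxc_def using UP(2) sh2 eqs that
    by (intro conjI) simp_all
qed

lemma maxc_restr_aux: "finite W \<Longrightarrow> \<forall>X C. finite X \<longrightarrow> maxc X C k \<longrightarrow> W \<subseteq> X \<longrightarrow> maxc (X - W) (restr C (X - W)) k"
proof (induction W rule: finite_induct)
  case empty
  show ?case
  proof (intro allI impI)
    fix X C assume "finite X" "maxc X C k" "{} \<subseteq> X"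
    then have "C \<subseteq> Pow X" unfolding maxc_def by blast
    then have "restr C X = C" by (rule restr_Pow)
    then show "maxc (X - {}) (restr C (X - {})) k" using \<open>maxc X C k\<close> by simp
  qed
next
  case (insert w W0)
  show ?case
  proof (intro allI impI)
    fix X C assume fX: "finite X" and M: "maxc X C k" and sub: "insert w W0 \<subseteq> X"
    let ?C' = "restr C (X - W0)"
    have "W0 \<subseteq> X" using sub by blast
    then have M': "maxc (X - W0) ?C' k" using insert.IH[rule_format, OF fX M] by blast
    have w: "w \<in> X - W0" using sub insert.hyps by auto
    have CP': "?C' \<subseteq> Pow (X - W0)" using M' unfolding maxc_def by auto
    have fXW: "finite (X - W0)" using fX by simp
    have e1: "X - insert w W0 = X - W0 - {w}" by auto
    have e2: "(X - W0) \<inter> (X - W0 - {w}) = X - W0 - {w}" by auto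
    have "maxc (X - W0 - {w}) (lo w ?C' \<union> hi w ?C') k" using maxc_delete(1)[OF fXW w M'] .
    moreover have "lo w ?C' \<union> hi w ?C' = restr C (X - W0 - {w})"
      using restr_delete[OF CP', of w] restr_restr[of C "X - W0" "X - W0 - {w}"] e2 by simp
    ultimately show "maxc (X - insert w W0) (restr C (X - insert w W0)) k"
      unfolding e1 by simp
  qed
qed

lemma maxc_restr: assumes "finite X" "maxc X C k" "Z \<subseteq> X" shows "maxc Z (restr C Z) k"
proof -
  have "finite (X - Z)" using assms(1) by auto
  have "X - Z \<subseteq> X" by blast
  from maxc_restr_aux[OF \<open>finite (X - Z)\<close>, rule_format, OF assms(1,2) this]
  have "maxc (X - (X - Z)) (restr C (X - (X - Z))) k" .
  moreover have "X - (X - Z) = Z" using assms(3) by auto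
  ultimately show ?thesis by simp
qed

lemma cube_mem: "v \<in> cube T Y \<longleftrightarrow> (\<exists>Z. Z \<subseteq> Y \<and> v = T \<union> Z)"
  unfolding cube_def by auto

lemma cube_exists_aux: "\<forall>(X::'a set) C Y. finite X \<longrightarrow> maxc X C k \<longrightarrow> Y \<subseteq> X \<longrightarrow> card Y = k \<longrightarrow>
   (\<exists>T. T \<subseteq> X - Y \<and> cube T Y \<subseteq> C)"
proof (induction k)
  case 0
  show ?case
  proof (intro allI impI)
    fix X :: "'a set" and C Y assume fX: "finite X" and M: "maxc X C 0" and Y: "Y \<subseteq> X" and cY: "card Y = 0"
    have "Y = {}" using cY Y fX finite_subset by fastforce
    have "card C = 1" using M unfolding maxc_def by simp
    then obtain T where T: "C = {T}" using card_1_singletonE by blast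
    then have "T \<subseteq> X" using M unfolding maxc_def by auto
    moreover have "cube T {} = {T}" unfolding cube_def by auto
    ultimately show "\<exists>T. T \<subseteq> X - Y \<and> cube T Y \<subseteq> C" using T \<open>Y = {}\<close> by auto
  qed
next
  case (Suc k)
  show ?case
  proof (intro allI impI)
    fix X :: "'a set" and C Y assume fX: "finite X" and M: "maxc X C (Suc k)" and Y: "Y \<subseteq> X" and cY: "card Y = Suc k"
    obtain y where y: "y \<in> Y" using cY by (metis card_eq_SucD insertI1)
    let ?Y0 = "Y - {y}" and ?R = "lo y C \<inter> hi y C"
    have fY: "finite Y" using Y fX finite_subset by blast
    have cY0: "card ?Y0 = k" using cY y fY by simp
    have yX: "y \<in> X" using y Y by auto
    have MR: "maxc (X - {y}) ?R k" using maxc_delete(2)[OF fX yX M] by simp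
    have Y0: "?Y0 \<subseteq> X - {y}" using Y by auto
    have fXy: "finite (X - {y})" using fX by simp
    obtain T where T: "T \<subseteq> X - {y} - ?Y0" and cT: "cube T ?Y0 \<subseteq> ?R"
      using Suc.IH[rule_format, OF fXy MR Y0 cY0] by blast
    have "T \<subseteq> X - Y" using T by auto
    moreover have "cube T Y \<subseteq> C"
    proof
      fix v assume "v \<in> cube T Y"
      then obtain Z where Z: "Z \<subseteq> Y" "v = T \<union> Z" unfolding cube_mem by auto
      have "T \<union> (Z - {y}) \<in> cube T ?Y0" unfolding cube_mem using Z(1) by blast
      then have "T \<union> (Z - {y}) \<in> ?R" using cT by (rule subsetD[rotated])
      then have a: "T \<union> (Z - {y}) \<in> C" "insert y (T \<union> (Z - {y})) \<in> C" using red_mem[of "T \<union> (Z - {y})" y C] by blast+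
      show "v \<in> C"
      proof (cases "y \<in> Z")
        case True
        then have "v = insert y (T \<union> (Z - {y}))" using Z by auto
        then show ?thesis using a by simp
      next
        case False
        then have "v = T \<union> (Z - {y})" using Z by auto
        then show ?thesis using a by simp
      qed
    qed
    ultimately show "\<exists>T. T \<subseteq> X - Y \<and> cube T Y \<subseteq> C" by blast
  qed
qed

lemma cube_exists: "finite X \<Longrightarrow> maxc X C k \<Longrightarrow> Y \<subseteq> X \<Longrightarrow> card Y = k \<Longrightarrow> \<exists>T. T \<subseteq> X - Y \<and> cube T Y \<subseteq> C"
  using cube_exists_aux by blast

lemma alt_zero:
  fixes g :: "'a set \<Rightarrow> real"
  assumes fY: "finite Y" and y: "y \<in> Y" and g: "\<And>Z. Z \<subseteq> Y - {y} \<Longrightarrow> g (insert y Z) = g Z"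
  shows "(\<Sum>Z\<in>Pow Y. (-1)^card (Y - Z) * g Z) = 0"
proof -
  let ?Y0 = "Y - {y}"
  let ?f = "\<lambda>Z. (-1::real)^card (Y - Z) * g Z"
  have YY: "Y = insert y ?Y0" using y by auto
  have PY: "Pow Y = Pow ?Y0 \<union> insert y ` Pow ?Y0" using Pow_insert[of y ?Y0] YY by simp
  have fP: "finite (Pow ?Y0)" using fY by simp
  have disj: "Pow ?Y0 \<inter> insert y ` Pow ?Y0 = {}" by auto
  have inj: "inj_on (insert y) (Pow ?Y0)"
    by (rule inj_onI) (metis Diff_insert_absorb PowD Diff_iff insertI1 subsetD)
  have "(\<Sum>Z\<in>Pow Y. ?f Z) = (\<Sum>Z\<in>Pow ?Y0. ?f Z) + (\<Sum>Z\<in>insert y ` Pow ?Y0. ?f Z)"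
    unfolding PY using sum.union_disjoint[OF fP _ disj] fP by simp
  also have "(\<Sum>Z\<in>insert y ` Pow ?Y0. ?f Z) = (\<Sum>Z\<in>Pow ?Y0. ?f (insert y Z))"
    using sum.reindex[OF inj] by simp
  also have "(\<Sum>Z\<in>Pow ?Y0. ?f Z) + (\<Sum>Z\<in>Pow ?Y0. ?f (insert y Z)) = (\<Sum>Z\<in>Pow ?Y0. ?f Z + ?f (insert y Z))"
    by (simp add: sum.distrib)
  also have "\<dots> = (\<Sum>Z\<in>Pow ?Y0. 0)"
  proof (rule sum.cong[OF refl])
    fix Z assume Z: "Z \<in> Pow ?Y0"
    have e1: "Y - Z = insert y (?Y0 - Z)" using Z y by auto
    have e2: "Y - insert y Z = ?Y0 - Z" by auto
    have fin: "finite (?Y0 - Z)" using fY by simp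
    have c1: "card (Y - Z) = Suc (card (?Y0 - Z))" unfolding e1 using fin by simp
    have "g (insert y Z) = g Z" using g Z by auto
    then show "?f Z + ?f (insert y Z) = 0" unfolding c1 e2 by simp
  qed
  finally show ?thesis by simp
qed

lemma main_bij:
  fixes C D Ds :: "'a set set" and Tl p :: "'a set \<Rightarrow> 'a set"
  assumes fC: "finite C" and DC: "D \<subseteq> C" and fDs: "finite Ds"
    and fY: "\<And>Y. Y \<in> Ds \<Longrightarrow> finite Y"
    and eqc: "\<And>Y Y'. Y \<in> Ds \<Longrightarrow> Y' \<in> Ds \<Longrightarrow> card Y = card Y'"
    and T: "\<And>Y. Y \<in> Ds \<Longrightarrow> Tl Y \<inter> Y = {}"
    and Q: "\<And>Y. Y \<in> Ds \<Longrightarrow> cube (Tl Y) Y \<subseteq> C"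
    and P: "\<And>Y. Y \<in> Ds \<Longrightarrow> p Y \<subseteq> Y"
    and Pn: "\<And>Y. Y \<in> Ds \<Longrightarrow> p Y \<notin> restr D Y"
    and card: "card (C - D) = card Ds"
  shows "bij_betw (\<lambda>Y. Tl Y \<union> p Y) Ds (C - D)"
proof -
  define A where "A Y c = (if c \<in> cube (Tl Y) Y then (-1::real)^card (Y - c) else 0)" for Y c
  define B where "B c Y = (if c \<inter> Y = p Y then (-1::real)^card (Y - p Y) else 0)" for c Y
  have notD: "c \<inter> Y \<noteq> p Y" if "c \<in> D" "Y \<in> Ds" for c Y
    using Pn[OF that(2)] that(1) unfolding restr_def by auto
  have cubeI: "cube T Y = (\<lambda>Z. T \<union> Z) ` Pow Y" for T Y :: "'a set"
    unfolding cube_def by auto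
  have orth: "(\<Sum>c\<in>C - D. A Y c * B c Y') = (if Y = Y' then 1 else 0)" if Y: "Y \<in> Ds" and Y': "Y' \<in> Ds" for Y Y'
  proof -
    let ?Q = "cube (Tl Y) Y"
    have QC: "?Q \<subseteq> C" using Q[OF Y] .
    have fQ: "finite ?Q" using QC fC finite_subset by blast
    have "(\<Sum>c\<in>C - D. A Y c * B c Y') = (\<Sum>c\<in>C. A Y c * B c Y')"
    proof (rule sum.mono_neutral_left[OF fC])
      show "C - D \<subseteq> C" by blast
      show "\<forall>i\<in>C - (C - D). A Y i * B i Y' = 0" using notD[OF _ Y'] DC unfolding B_def by auto
    qed
    also have "\<dots> = (\<Sum>c\<in>?Q. A Y c * B c Y')"
    proof (rule sum.mono_neutral_right[OF fC QC])
      show "\<forall>i\<in>C - ?Q. A Y i * B i Y' = 0" unfolding A_def by auto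
    qed
    also have "\<dots> = (\<Sum>c\<in>?Q. (-1)^card (Y - c) * B c Y')"
      unfolding A_def by (rule sum.cong) auto
    also have "\<dots> = (\<Sum>Z\<in>Pow Y. (-1)^card (Y - Z) * B (Tl Y \<union> Z) Y')"
    proof -
      have inj: "inj_on (\<lambda>Z. Tl Y \<union> Z) (Pow Y)"
      proof (rule inj_onI)
        fix Z1 Z2 assume "Z1 \<in> Pow Y" "Z2 \<in> Pow Y" "Tl Y \<union> Z1 = Tl Y \<union> Z2"
        then have "(Tl Y \<union> Z1) \<inter> Y = (Tl Y \<union> Z2) \<inter> Y" by simp
        moreover have "(Tl Y \<union> Z1) \<inter> Y = Z1" "(Tl Y \<union> Z2) \<inter> Y = Z2" using T[OF Y] \<open>Z1 \<in> Pow Y\<close> \<open>Z2 \<in> Pow Y\<close> by auto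
        ultimately show "Z1 = Z2" by simp
      qed
      have "(\<Sum>c\<in>?Q. (-1)^card (Y - c) * B c Y') = (\<Sum>Z\<in>Pow Y. (-1)^card (Y - (Tl Y \<union> Z)) * B (Tl Y \<union> Z) Y')"
        unfolding cubeI using sum.reindex[OF inj] by simp
      also have "\<dots> = (\<Sum>Z\<in>Pow Y. (-1)^card (Y - Z) * B (Tl Y \<union> Z) Y')"
      proof (rule sum.cong[OF refl])
        fix Z assume "Z \<in> Pow Y"
        have "Y - (Tl Y \<union> Z) = Y - Z" using T[OF Y] by auto
        then show "(-1::real)^card (Y - (Tl Y \<union> Z)) * B (Tl Y \<union> Z) Y' = (-1)^card (Y - Z) * B (Tl Y \<union> Z) Y'" by simp
      qed
      finally show ?thesis .
    qed
    also have "\<dots> = (if Y = Y' then 1 else 0)"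
    proof (cases "Y = Y'")
      case False
      have "\<not> Y \<subseteq> Y'"
      proof
        assume "Y \<subseteq> Y'"
        then have "Y = Y'" using card_subset_eq[OF fY[OF Y'] _ eqc[OF Y Y']] by blast
        then show False using False by simp
      qed
      then obtain y where y: "y \<in> Y" "y \<notin> Y'" by blast
      have "(\<Sum>Z\<in>Pow Y. (-1)^card (Y - Z) * B (Tl Y \<union> Z) Y') = 0"
      proof (rule alt_zero[OF fY[OF Y] y(1)])
        fix Z assume "Z \<subseteq> Y - {y}"
        have "(Tl Y \<union> insert y Z) \<inter> Y' = (Tl Y \<union> Z) \<inter> Y'" using y(2) by auto
        then show "B (Tl Y \<union> insert y Z) Y' = B (Tl Y \<union> Z) Y'" unfolding B_def by simp
      qed
      then show ?thesis using False by simp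
    next
      case True
      let ?s = "(-1::real)^card (Y - p Y)"
      have "(\<Sum>Z\<in>Pow Y. (-1)^card (Y - Z) * B (Tl Y \<union> Z) Y') =
            (\<Sum>Z\<in>Pow Y. if Z = p Y then (-1)^card (Y - Z) * ?s else 0)"
      proof (rule sum.cong[OF refl])
        fix Z assume "Z \<in> Pow Y"
        then have "(Tl Y \<union> Z) \<inter> Y = Z" using T[OF Y] by auto
        then show "(-1)^card (Y - Z) * B (Tl Y \<union> Z) Y' = (if Z = p Y then (-1)^card (Y - Z) * ?s else 0)"
          unfolding B_def True[symmetric] by simp
      qed
      also have "\<dots> = (-1)^card (Y - p Y) * ?s"
        using P[OF Y] fY[OF Y] by (simp add: sum.delta)
      also have "\<dots> = 1" by (simp add: power_mult_distrib[symmetric])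
      finally show ?thesis using True by simp
    qed
    finally show ?thesis .
  qed
  have fCD: "finite (C - D)" using fC by simp
  have diag: "(\<Sum>Y\<in>Ds. B c Y * A Y c) = 1" if c: "c \<in> C - D" for c
    using LR_inverse[OF fDs fCD card[symmetric], of A B c c] orth c by simp
  have surj: "\<exists>Y\<in>Ds. c = Tl Y \<union> p Y" if c: "c \<in> C - D" for c
  proof -
    have "\<exists>Y\<in>Ds. B c Y * A Y c \<noteq> 0"
    proof (rule ccontr)
      assume "\<not> ?thesis"
      then have "\<forall>Y\<in>Ds. B c Y * A Y c = 0" by blast
      then have "(\<Sum>Y\<in>Ds. B c Y * A Y c) = 0" by (rule sum.neutral)
      then show False using diag[OF c] by simp
    qed
    then obtain Y where Y: "Y \<in> Ds" and nz: "B c Y * A Y c \<noteq> 0" by blast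
    have cY: "c \<inter> Y = p Y" using nz unfolding B_def by (auto split: if_splits)
    have "c \<in> cube (Tl Y) Y" using nz unfolding A_def by (auto split: if_splits)
    then obtain Z where Z: "Z \<subseteq> Y" "c = Tl Y \<union> Z" unfolding cube_mem by blast
    then have "c \<inter> Y = Z" using T[OF Y] by auto
    then show ?thesis using Y Z cY by auto
  qed
  have img: "(\<lambda>Y. Tl Y \<union> p Y) ` Ds = C - D"
  proof
    show "(\<lambda>Y. Tl Y \<union> p Y) ` Ds \<subseteq> C - D"
    proof
      fix c assume "c \<in> (\<lambda>Y. Tl Y \<union> p Y) ` Ds"
      then obtain Y where Y: "Y \<in> Ds" "c = Tl Y \<union> p Y" by blast
      have "c \<in> cube (Tl Y) Y" unfolding cube_mem using P[OF Y(1)] Y(2) by blast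
      then have "c \<in> C" using Q[OF Y(1)] by blast
      moreover have "c \<inter> Y = p Y" using Y(2) T[OF Y(1)] P[OF Y(1)] by auto
      then have "c \<notin> D" using notD[OF _ Y(1)] by blast
      ultimately show "c \<in> C - D" by blast
    qed
    show "C - D \<subseteq> (\<lambda>Y. Tl Y \<union> p Y) ` Ds" using surj by blast
  qed
  have "inj_on (\<lambda>Y. Tl Y \<union> p Y) Ds"
    by (rule eq_card_imp_inj_on[OF fDs]) (simp add: img card)
  then show ?thesis unfolding bij_betw_def using img by blast
qed

lemma maxc_of_max: "maximum_class X C d \<Longrightarrow> maxc X C d"
  unfolding maximum_class_def maxc_def vc_dim_is_def shattered_sets_def by blast

lemma ss_maxc: assumes fX: "finite X" and M: "maxc X C k"
  shows "shattered_sets X C = {S. S \<subseteq> X \<and> card S \<le> k}"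
proof -
  have CP: "C \<subseteq> Pow X" and sh: "\<forall>S. S \<subseteq> X \<and> shatters C S \<longrightarrow> card S \<le> k"
    and cC: "card C = (\<Sum>i\<le>k. card X choose i)" using M unfolding maxc_def by blast+
  have sub: "shattered_sets X C \<subseteq> {S. S \<subseteq> X \<and> card S \<le> k}"
    using sh unfolding shattered_sets_def by blast
  have fin: "finite {S. S \<subseteq> X \<and> card S \<le> k}" using fX by simp
  have "card {S. S \<subseteq> X \<and> card S \<le> k} \<le> card (shattered_sets X C)"
    using card_small_subsets[OF fX, of k] cC pajor[OF fX CP] by simp
  then show ?thesis using card_seteq[OF fin sub] by blast
qed

lemma card_diff_maxc: assumes fX: "finite X" and d1: "1 \<le> d" and MC: "maxc X C d"
  and MD: "maxc X D (d - 1)" and DC: "D \<subseteq> C"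
  shows "card (C - D) = card {Y. Y \<subseteq> X \<and> card Y = d}"
proof -
  have fC: "finite C" using MC fX unfolding maxc_def by (meson finite_Pow_iff finite_subset)
  have fD: "finite D" using fC DC finite_subset by blast
  obtain d' where d': "d = Suc d'" using d1 by (cases d) auto
  have cC: "card C = (\<Sum>i\<le>d'. card X choose i) + (card X choose d)"
    using MC unfolding maxc_def d' by simp
  have cD: "card D = (\<Sum>i\<le>d'. card X choose i)" using MD unfolding maxc_def d' by simp
  have "card (C - D) = card C - card D" using card_Diff_subset[OF fD DC] .
  also have "\<dots> = card X choose d" using cC cD by simp
  also have "\<dots> = card {Y. Y \<subseteq> X \<and> card Y = d}" using n_subsets[OF fX] by simp
  finally show ?thesis .
qed

lemma cube_restr: assumes "cube T W \<subseteq> C" "W \<subseteq> Z" shows "cube (T \<inter> Z) W \<subseteq> restr C Z"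
proof
  fix v assume "v \<in> cube (T \<inter> Z) W"
  then obtain V where V: "V \<subseteq> W" "v = (T \<inter> Z) \<union> V" unfolding cube_mem by blast
  have "T \<union> V \<in> cube T W" unfolding cube_mem using V(1) by blast
  then have "T \<union> V \<in> C" using assms(1) by blast
  moreover have "v = (T \<union> V) \<inter> Z" using V assms(2) by auto
  ultimately show "v \<in> restr C Z" unfolding restr_def by blast
qed

lemma cube_split: assumes "T \<inter> Y = {}" "c \<in> cube T Y" shows "c = T \<union> (c \<inter> Y)" "T = c - Y"
proof -
  obtain Z where Z: "Z \<subseteq> Y" "c = T \<union> Z" using assms(2) unfolding cube_mem by blast
  then have "c \<inter> Y = Z" using assms(1) by auto
  then show "c = T \<union> (c \<inter> Y)" "T = c - Y" using Z assms(1) by auto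
qed

lemma core:
  assumes fX: "finite X" and d1: "1 \<le> d" and MC: "maxc X C d" and MD: "maxc X D (d - 1)" and DC: "D \<subseteq> C"
    and H: "\<And>Y. Y \<subseteq> X \<Longrightarrow> card Y = d \<Longrightarrow> Tl Y \<inter> Y = {} \<and> cube (Tl Y) Y \<subseteq> C \<and> p Y \<subseteq> Y \<and> p Y \<notin> restr D Y"
  shows "bij_betw (\<lambda>Y. Tl Y \<union> p Y) {Y. Y \<subseteq> X \<and> card Y = d} (C - D)"
proof (rule main_bij)
  show fC: "finite C" using MC fX unfolding maxc_def by (meson finite_Pow_iff finite_subset)
  show "D \<subseteq> C" by fact
  show "finite {Y. Y \<subseteq> X \<and> card Y = d}" using fX by simp
  show "card (C - D) = card {Y. Y \<subseteq> X \<and> card Y = d}" using card_diff_maxc[OF fX d1 MC MD DC] .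
  fix Y assume "Y \<in> {Y. Y \<subseteq> X \<and> card Y = d}"
  then have Y: "Y \<subseteq> X" "card Y = d" by auto
  show "finite Y" using Y(1) fX finite_subset by blast
  show "Tl Y \<inter> Y = {}" "cube (Tl Y) Y \<subseteq> C" "p Y \<subseteq> Y" "p Y \<notin> restr D Y" using H[OF Y] by blast+
next
  fix Y Y' assume "Y \<in> {Y. Y \<subseteq> X \<and> card Y = d}" "Y' \<in> {Y. Y \<subseteq> X \<and> card Y = d}"
  then show "card Y = card Y'" by simp
qed

lemma source_char:
  assumes fX: "finite X" and d1: "1 \<le> d" and MC: "maxc X C d" and MD: "maxc X D (d - 1)"
    and S: "is_source X C D T Y c"
  shows "Y \<subseteq> X" "card Y = d" "T \<inter> Y = {}" "T \<subseteq> X - Y" "cube T Y \<subseteq> C" "c \<inter> Y \<notin> restr D Y"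
    "c = T \<union> (c \<inter> Y)" "T = c - Y" "c \<inter> Y \<subseteq> Y" "c \<in> C"
proof -
  have ic: "incomplete_cube X C D T Y" and cQ: "c \<in> cube T Y" and nD: "c \<inter> Y \<notin> restr D Y"
    using S unfolding is_source_def by blast+
  have cb: "is_cube X T Y" and QC: "cube T Y \<subseteq> C" and Ys: "Y \<in> shattered_sets X C - shattered_sets X D"
    using ic unfolding incomplete_cube_def by blast+
  show "Y \<subseteq> X" "T \<subseteq> X - Y" using cb unfolding is_cube_def by blast+
  then show TY: "T \<inter> Y = {}" by blast
  have "card Y \<le> d" using Ys ss_maxc[OF fX MC] by blast
  moreover have "\<not> card Y \<le> d - 1" using Ys ss_maxc[OF fX MD] \<open>Y \<subseteq> X\<close> by blast
  ultimately show "card Y = d" by linarith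
  show "cube T Y \<subseteq> C" "c \<inter> Y \<notin> restr D Y" using QC nD by blast+
  show "c = T \<union> (c \<inter> Y)" "T = c - Y" using cube_split[OF TY cQ] by blast+
  show "c \<inter> Y \<subseteq> Y" by blast
  show "c \<in> C" using cQ QC by blast
qed

lemma source_intro:
  assumes fX: "finite X" and d1: "1 \<le> d" and MC: "maxc X C d" and MD: "maxc X D (d - 1)"
    and Y: "Y \<subseteq> X" "card Y = d" and T: "T \<subseteq> X - Y" and Q: "cube T Y \<subseteq> C"
    and p: "p \<subseteq> Y" "p \<notin> restr D Y"
  shows "is_source X C D T Y (T \<union> p)"
proof -
  have "Y \<in> shattered_sets X C" using ss_maxc[OF fX MC] Y by simp
  moreover have "Y \<notin> shattered_sets X D" using ss_maxc[OF fX MD] Y d1 by simp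
  ultimately have ic: "incomplete_cube X C D T Y"
    unfolding incomplete_cube_def is_cube_def using Y T Q by blast
  have "T \<union> p \<in> cube T Y" unfolding cube_mem using p(1) by blast
  moreover have "(T \<union> p) \<inter> Y = p" using T p(1) by auto
  ultimately show ?thesis unfolding is_source_def using ic p(2) by simp
qed

theorem proposition5p2:
  fixes X :: "'a set" and C D :: "'a set set" and d :: nat
  assumes "finite X"
    and "1 \<le> d"
    and "maximum_class X C d"
    and "maximum_class X D (d - 1)"
    and "D \<subseteq> C"
  shows "(\<forall>c\<in>C - D. \<exists>!(T, Y). is_source X C D T Y c)
    \<and> (\<forall>r'. representation_map X D r' \<longrightarrow>
          representation_map X C
            (\<lambda>c. if c \<in> D then r' c else (THE Y. \<exists>T. is_source X C D T Y c)))"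
proof -
  have MC: "maxc X C d" using assms(3) by (rule maxc_of_max)
  have MD: "maxc X D (d - 1)" using assms(4) by (rule maxc_of_max)
  note fX = assms(1) and d1 = assms(2) and DC = assms(5)
  let ?Ds = "{Y. Y \<subseteq> X \<and> card Y = d}"
  have exT: "\<exists>T. T \<subseteq> X - Y \<and> cube T Y \<subseteq> C" if "Y \<subseteq> X" "card Y = d" for Y
    using cube_exists[OF fX MC that] .
  have exP: "\<exists>P. P \<subseteq> Y \<and> P \<notin> restr D Y" if "Y \<subseteq> X" "card Y = d" for Y
  proof -
    have "Y \<notin> shattered_sets X D" using ss_maxc[OF fX MD] that d1 by simp
    then have "\<not> shatters D Y" using that(1) unfolding shattered_sets_def by blast
    then obtain Z where Z: "Z \<subseteq> Y" "\<forall>c\<in>D. c \<inter> Y \<noteq> Z" unfolding shatters_iff by blast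
    then have "Z \<notin> restr D Y" unfolding restr_def by blast
    then show ?thesis using Z(1) by blast
  qed
  define Tl0 where "Tl0 Y = (SOME T. T \<subseteq> X - Y \<and> cube T Y \<subseteq> C)" for Y
  define p0 where "p0 Y = (SOME P. P \<subseteq> Y \<and> P \<notin> restr D Y)" for Y
  have Tl0: "Tl0 Y \<subseteq> X - Y \<and> cube (Tl0 Y) Y \<subseteq> C" if "Y \<subseteq> X" "card Y = d" for Y
    unfolding Tl0_def using someI_ex[OF exT[OF that]] .
  have p0: "p0 Y \<subseteq> Y \<and> p0 Y \<notin> restr D Y" if "Y \<subseteq> X" "card Y = d" for Y
    unfolding p0_def using someI_ex[OF exP[OF that]] .
  have H0: "Tl0 Y \<inter> Y = {} \<and> cube (Tl0 Y) Y \<subseteq> C \<and> p0 Y \<subseteq> Y \<and> p0 Y \<notin> restr D Y"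
    if "Y \<subseteq> X" "card Y = d" for Y
    using Tl0[OF that] p0[OF that] by blast
  have bij0: "bij_betw (\<lambda>Y. Tl0 Y \<union> p0 Y) ?Ds (C - D)"
    using core[OF fX d1 MC MD DC H0] .
  have src0: "is_source X C D (Tl0 Y) Y (Tl0 Y \<union> p0 Y)" if "Y \<subseteq> X" "card Y = d" for Y
    using source_intro[OF fX d1 MC MD that _ _ _ _] Tl0[OF that] p0[OF that] by blast
  have ex: "\<exists>T Y. is_source X C D T Y c" if c: "c \<in> C - D" for c
  proof -
    have "c \<in> (\<lambda>Y. Tl0 Y \<union> p0 Y) ` ?Ds" using bij0 c unfolding bij_betw_def by blast
    then obtain Y where Y: "Y \<subseteq> X" "card Y = d" "c = Tl0 Y \<union> p0 Y" by blast
    then show ?thesis using src0[OF Y(1,2)] by blast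
  qed
  have uniq: "T1 = T2 \<and> Y1 = Y2"
    if S1: "is_source X C D T1 Y1 c" and S2: "is_source X C D T2 Y2 c" for T1 Y1 T2 Y2 c
  proof -
    note c1 = source_char[OF fX d1 MC MD S1] and c2 = source_char[OF fX d1 MC MD S2]
    have "Y1 = Y2"
    proof (rule ccontr)
      assume ne: "Y1 \<noteq> Y2"
      define Tl' where "Tl' = Tl0(Y1 := T1, Y2 := T2)"
      define p' where "p' = p0(Y1 := c \<inter> Y1, Y2 := c \<inter> Y2)"
      have H: "Tl' Y \<inter> Y = {} \<and> cube (Tl' Y) Y \<subseteq> C \<and> p' Y \<subseteq> Y \<and> p' Y \<notin> restr D Y"
        if "Y \<subseteq> X" "card Y = d" for Y
      proof (cases "Y = Y1")
        case True
        then show ?thesis unfolding Tl'_def p'_def using c1(3,5,6,9) ne by simp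
      next
        case False
        show ?thesis
        proof (cases "Y = Y2")
          case True
          then show ?thesis unfolding Tl'_def p'_def using c2(3,5,6,9) ne False by simp
        next
          case False2: False
          then show ?thesis unfolding Tl'_def p'_def using H0[OF that] False by simp
        qed
      qed
      have "bij_betw (\<lambda>Y. Tl' Y \<union> p' Y) ?Ds (C - D)" using core[OF fX d1 MC MD DC H] .
      then have inj: "inj_on (\<lambda>Y. Tl' Y \<union> p' Y) ?Ds" unfolding bij_betw_def by blast
      have v1: "Tl' Y1 \<union> p' Y1 = c" unfolding Tl'_def p'_def using c1(7)[symmetric] ne by simp
      have v2: "Tl' Y2 \<union> p' Y2 = c" unfolding Tl'_def p'_def using c2(7)[symmetric] ne by simp
      have "Y1 \<in> ?Ds" "Y2 \<in> ?Ds" using c1(1,2) c2(1,2) by blast+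
      then have "Y1 = Y2" using inj_onD[OF inj _ \<open>Y1 \<in> ?Ds\<close> \<open>Y2 \<in> ?Ds\<close>] v1 v2 by simp
      then show False using ne by simp
    qed
    then show ?thesis using c1(8) c2(8) by simp
  qed
  have part1: "\<forall>c\<in>C - D. \<exists>!(T, Y). is_source X C D T Y c"
  proof
    fix c assume c: "c \<in> C - D"
    obtain T Y where S: "is_source X C D T Y c" using ex[OF c] by blast
    show "\<exists>!(T, Y). is_source X C D T Y c"
    proof (rule ex1I[of _ "(T, Y)"])
      show "case (T, Y) of (T, Y) \<Rightarrow> is_source X C D T Y c" using S by simp
    next
      fix x assume x: "case x of (T, Y) \<Rightarrow> is_source X C D T Y c"
      obtain T' Y' where xe: "x = (T', Y')" by (cases x)
      then have "is_source X C D T' Y' c" using x by simp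
      then have "T' = T \<and> Y' = Y" using uniq S by blast
      then show "x = (T, Y)" using xe by simp
    qed
  qed
  define Yc where "Yc = (\<lambda>c. THE Y. \<exists>T. is_source X C D T Y c)"
  have Yc_eq: "Yc c = Y" if S: "is_source X C D T Y c" for T Y c
    unfolding Yc_def
  proof (rule the_equality)
    show "\<exists>T. is_source X C D T Y c" using S by blast
    fix Y' assume "\<exists>T. is_source X C D T Y' c"
    then obtain T' where "is_source X C D T' Y' c" by blast
    then show "Y' = Y" using uniq S by blast
  qed
  have Yc: "\<exists>T. is_source X C D T (Yc c) c" if c: "c \<in> C - D" for c
  proof -
    obtain T Y where S: "is_source X C D T Y c" using ex[OF c] by blast
    then show ?thesis using Yc_eq[OF S] by blast
  qed
  have YcDs: "Yc c \<in> ?Ds" if c: "c \<in> C - D" for c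
  proof -
    obtain T where S: "is_source X C D T (Yc c) c" using Yc[OF c] by blast
    show ?thesis using source_char(1,2)[OF fX d1 MC MD S] by blast
  qed
  have cardCD: "card (C - D) = card ?Ds" using card_diff_maxc[OF fX d1 MC MD DC] .
  have fCD: "finite (C - D)" using MC fX unfolding maxc_def by (meson finite_Diff finite_Pow_iff finite_subset)
  have imgY: "Yc ` (C - D) = ?Ds"
  proof
    show "Yc ` (C - D) \<subseteq> ?Ds" using YcDs by blast
    show "?Ds \<subseteq> Yc ` (C - D)"
    proof
      fix Y assume "Y \<in> ?Ds"
      then have Y: "Y \<subseteq> X" "card Y = d" by auto
      have "Tl0 Y \<union> p0 Y \<in> C - D" using bij0 Y unfolding bij_betw_def by blast
      moreover have "Yc (Tl0 Y \<union> p0 Y) = Y" using Yc_eq[OF src0[OF Y]] .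
      ultimately show "Y \<in> Yc ` (C - D)" by (metis imageI)
    qed
  qed
  have bijY: "bij_betw Yc (C - D) ?Ds"
  proof -
    have "inj_on Yc (C - D)" by (rule eq_card_imp_inj_on[OF fCD]) (simp add: imgY cardCD)
    then show ?thesis unfolding bij_betw_def using imgY by blast
  qed
  have ssC: "shattered_sets X C = shattered_sets X D \<union> ?Ds"
    using ss_maxc[OF fX MC] ss_maxc[OF fX MD] d1 by auto
  have disjD: "shattered_sets X D \<inter> ?Ds = {}"
    using ss_maxc[OF fX MD] d1 by auto
  have mixed: "a \<inter> (Yc a \<union> R) \<noteq> b \<inter> (Yc a \<union> R)" if a: "a \<in> C - D" and b: "b \<in> D" for a b R
  proof
    assume eq: "a \<inter> (Yc a \<union> R) = b \<inter> (Yc a \<union> R)"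
    obtain T where S: "is_source X C D T (Yc a) a" using Yc[OF a] by blast
    have n: "a \<inter> Yc a \<notin> restr D (Yc a)" using source_char(6)[OF fX d1 MC MD S] .
    have m: "b \<inter> Yc a \<in> restr D (Yc a)" unfolding restr_def using b by blast
    have "a \<inter> Yc a = b \<inter> Yc a" using eq by (auto simp: set_eq_iff)
    then show False using n m by simp
  qed
  have bothCD: "a \<inter> (Yc a \<union> Yc b) \<noteq> b \<inter> (Yc a \<union> Yc b)"
    if a: "a \<in> C - D" and b: "b \<in> C - D" and ab: "a \<noteq> b" for a b
  proof
    assume eq: "a \<inter> (Yc a \<union> Yc b) = b \<inter> (Yc a \<union> Yc b)"
    obtain Ta where Sa: "is_source X C D Ta (Yc a) a" using Yc[OF a] by blast
    obtain Tb where Sb: "is_source X C D Tb (Yc b) b" using Yc[OF b] by blast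
    note ca = source_char[OF fX d1 MC MD Sa] and cb = source_char[OF fX d1 MC MD Sb]
    define Y where "Y = Yc a"
    define Y' where "Y' = Yc b"
    define Z where "Z = Y \<union> Y'"
    have injY: "inj_on Yc (C - D)" using bijY unfolding bij_betw_def by blast
    have neq: "Y \<noteq> Y'" using inj_onD[OF injY _ a b] ab unfolding Y_def Y'_def by blast
    have ZX: "Z \<subseteq> X" using ca(1) cb(1) unfolding Z_def Y_def Y'_def by blast
    have fZ: "finite Z" using ZX fX finite_subset by blast
    have MCZ: "maxc Z (restr C Z) d" using maxc_restr[OF fX MC ZX] .
    have MDZ: "maxc Z (restr D Z) (d - 1)" using maxc_restr[OF fX MD ZX] .
    have DCZ: "restr D Z \<subseteq> restr C Z" unfolding restr_def using DC by blast
    define TlZ where "TlZ W = (if W = Y then Ta \<inter> Z else if W = Y' then Tb \<inter> Z else Tl0 W \<inter> Z)" for W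
    define pZ where "pZ W = (if W = Y then a \<inter> Y else if W = Y' then b \<inter> Y' else p0 W)" for W
    have HZ: "TlZ W \<inter> W = {} \<and> cube (TlZ W) W \<subseteq> restr C Z \<and> pZ W \<subseteq> W \<and> pZ W \<notin> restr (restr D Z) W"
      if W: "W \<subseteq> Z" "card W = d" for W
    proof -
      have WX: "W \<subseteq> X" using W ZX by blast
      have rr: "restr (restr D Z) W = restr D W" using restr_restr[of D Z W] W(1)
        by (simp add: Int_absorb1)
      show ?thesis
      proof (cases "W = Y")
        case True
        then show ?thesis unfolding TlZ_def pZ_def rr
          using ca(3,5,6) cube_restr[of Ta Y C Z] W(1) unfolding Y_def by auto
      next
        case False
        show ?thesis
        proof (cases "W = Y'")
          case True
          then show ?thesis unfolding TlZ_def pZ_def rr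
            using cb(3,5,6) cube_restr[of Tb Y' C Z] W(1) neq unfolding Y'_def by auto
        next
          case False2: False
          have h: "Tl0 W \<inter> W = {}" "cube (Tl0 W) W \<subseteq> C" "p0 W \<subseteq> W" "p0 W \<notin> restr D W"
            using H0[OF WX W(2)] by blast+
          show ?thesis unfolding TlZ_def pZ_def rr using False False2 h cube_restr[OF h(2) W(1)] by auto
        qed
      qed
    qed
    have "bij_betw (\<lambda>W. TlZ W \<union> pZ W) {W. W \<subseteq> Z \<and> card W = d} (restr C Z - restr D Z)"
      using core[OF fZ d1 MCZ MDZ DCZ HZ] .
    then have inj: "inj_on (\<lambda>W. TlZ W \<union> pZ W) {W. W \<subseteq> Z \<and> card W = d}" unfolding bij_betw_def by blast
    have YZ: "Y \<in> {W. W \<subseteq> Z \<and> card W = d}" using ca(2) unfolding Z_def Y_def by blast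
    have YZ': "Y' \<in> {W. W \<subseteq> Z \<and> card W = d}" using cb(2) unfolding Z_def Y'_def by blast
    have va: "TlZ Y \<union> pZ Y = a \<inter> Z"
    proof -
      have "TlZ Y \<union> pZ Y = ((a - Y) \<inter> Z) \<union> (a \<inter> Y)" unfolding TlZ_def pZ_def using ca(8) unfolding Y_def by simp
      also have "\<dots> = a \<inter> Z" unfolding Z_def by blast
      finally show ?thesis .
    qed
    have vb: "TlZ Y' \<union> pZ Y' = b \<inter> Z"
    proof -
      have "TlZ Y' \<union> pZ Y' = ((b - Y') \<inter> Z) \<union> (b \<inter> Y')" unfolding TlZ_def pZ_def using cb(8) neq unfolding Y'_def by simp
      also have "\<dots> = b \<inter> Z" unfolding Z_def by blast
      finally show ?thesis .
    qed
    have "a \<inter> Z = b \<inter> Z" using eq unfolding Z_def Y_def Y'_def .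
    then have "Y = Y'" using inj_onD[OF inj _ YZ YZ'] va vb by simp
    then show False using neq by simp
  qed
  show ?thesis
  proof (intro conjI part1 allI impI)
    fix r' assume rep: "representation_map X D r'"
    have bijr': "bij_betw r' D (shattered_sets X D)"
      and nc': "\<forall>c\<in>D. \<forall>c'\<in>D. c \<noteq> c' \<longrightarrow> c \<inter> (r' c \<union> r' c') \<noteq> c' \<inter> (r' c \<union> r' c')"
      using rep unfolding representation_map_def by blast+
    define r where "r = (\<lambda>c. if c \<in> D then r' c else Yc c)"
    have req: "(\<lambda>c. if c \<in> D then r' c else (THE Y. \<exists>T. is_source X C D T Y c)) = r"
      unfolding r_def Yc_def by simp
    have b1: "bij_betw r D (shattered_sets X D)"
      using bijr' bij_betw_cong[of D r r' "shattered_sets X D"] unfolding r_def by simp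
    have b2: "bij_betw r (C - D) ?Ds"
      using bijY bij_betw_cong[of "C - D" r Yc ?Ds] unfolding r_def by simp
    have "bij_betw r (D \<union> (C - D)) (shattered_sets X D \<union> ?Ds)"
      by (rule bij_betw_combine[OF b1 b2 disjD])
    moreover have "D \<union> (C - D) = C" using DC by blast
    ultimately have bij: "bij_betw r C (shattered_sets X C)" using ssC by simp
    have nc: "c \<inter> (r c \<union> r c') \<noteq> c' \<inter> (r c \<union> r c')" if c: "c \<in> C" and c': "c' \<in> C" and ne: "c \<noteq> c'" for c c'
    proof (cases "c \<in> D")
      case True
      show ?thesis
      proof (cases "c' \<in> D")
        case True2: True
        then show ?thesis using nc' True ne unfolding r_def by simp
      next
        case False2: False
        have "c' \<inter> (Yc c' \<union> r' c) \<noteq> c \<inter> (Yc c' \<union> r' c)" using mixed[of c' c "r' c"] c' False2 True by blast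
        then show ?thesis using True False2 unfolding r_def by (simp add: Un_commute)
      qed
    next
      case False
      show ?thesis
      proof (cases "c' \<in> D")
        case True2: True
        have "c \<inter> (Yc c \<union> r' c') \<noteq> c' \<inter> (Yc c \<union> r' c')" using mixed[of c c' "r' c'"] c False True2 by blast
        then show ?thesis using False True2 unfolding r_def by simp
      next
        case False2: False
        then show ?thesis using bothCD[of c c'] c c' False ne unfolding r_def by simp
      qed
    qed
    show "representation_map X C (\<lambda>c. if c \<in> D then r' c else (THE Y. \<exists>T. is_source X C D T Y c))"
      unfolding req representation_map_def using bij nc by blast
  qed
qed

end
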